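(* Let $L_5$ be the $5$-element linearly ordered set. There are infinitely many pairwise non-equivalent monotone games over $L_5$.
   Context: Games over a poset $A$ of atoms are defined inductively: for each $a\in A$, $[a]$ is a game (atomic); whenever $L,R$ are non-empty sets of games, $\{L\mid R\}$ is a game (composite), with left options the elements of $L$ and right options the elements of $R$. A position of $G$ is $G$ itself, an option of $G$, an option of an option, etc. Relations $\le$ and $\lhd$ on games are defined by mutual recursion: $G\le H$ iff (1) every left option $G^L$ of $G$ satisfies $G^L\lhd H$, (2) every right option $H^R$ of $H$ satisfies $G\lhd H^R$, and (3) if $G$ or $H$ is atomic then $G\lhd H$. $G\lhd H$ iff (1) some right option $G^R$ of $G$ satisfies $G^R\le H$, or (2) some left option $H^L$ of $H$ satisfies $G\le H^L$, or (3) $G=[a]$, $H=[b]$ are atomic with $a\le b$ in $A$. Games $G,H$ are equivalent if $G\le H$ and $H\le G$. A game $G$ is locally monotone if every left option satisfies $G\le G^L$ and every right option satisfies $G^R\le G$; it is monotone if every position of $G$ is locally monotone. *)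

theory Defs
  imports Main "HOL-Library.FSet"
begin

(* Games over a set of atoms of type 'a.  Composite games have finite sets of
   left/right options; non-emptiness of the option sets is imposed by the
   well-formedness predicate wf_game below. *)
datatype 'a game = Atom 'a | Comp "'a game fset" "'a game fset"

fun is_atomic :: "'a game \<Rightarrow> bool" where
  "is_atomic (Atom a) = True"
| "is_atomic (Comp L R) = False"

fun lefts :: "'a game \<Rightarrow> 'a game set" where
  "lefts (Atom a) = {}"
| "lefts (Comp L R) = fset L"

fun rights :: "'a game \<Rightarrow> 'a game set" where
  "rights (Atom a) = {}"
| "rights (Comp L R) = fset R"

inductive_set positions :: "'a game \<Rightarrow> 'a game set" for G where
  self: "G \<in> positions G"
| left: "P \<in> positions G \<Longrightarrow> Q \<in> lefts P \<Longrightarrow> Q \<in> positions G"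
| right: "P \<in> positions G \<Longrightarrow> Q \<in> rights P \<Longrightarrow> Q \<in> positions G"

definition wf_game :: "'a game \<Rightarrow> bool" where
  "wf_game G \<longleftrightarrow> (\<forall>P \<in> positions G. \<not> is_atomic P \<longrightarrow> lefts P \<noteq> {} \<and> rights P \<noteq> {})"

(* the relations \<le> and \<lhd>, relative to the order leA on the atoms, defined by
   mutual (well-founded) recursion; since the recursion is well-founded the
   least fixed point below is the unique solution of the defining clauses *)
inductive game_le :: "('a \<Rightarrow> 'a \<Rightarrow> bool) \<Rightarrow> 'a game \<Rightarrow> 'a game \<Rightarrow> bool"
  and game_lf :: "('a \<Rightarrow> 'a \<Rightarrow> bool) \<Rightarrow> 'a game \<Rightarrow> 'a game \<Rightarrow> bool"
  for leA where
  le_intro: "\<lbrakk> \<forall>GL. GL \<in> lefts G \<longrightarrow> game_lf leA GL H;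
              \<forall>HR. HR \<in> rights H \<longrightarrow> game_lf leA G HR;
              is_atomic G \<or> is_atomic H \<longrightarrow> game_lf leA G H \<rbrakk>
             \<Longrightarrow> game_le leA G H"
| lf_right: "\<lbrakk> GR \<in> rights G; game_le leA GR H \<rbrakk> \<Longrightarrow> game_lf leA G H"
| lf_left: "\<lbrakk> HL \<in> lefts H; game_le leA G HL \<rbrakk> \<Longrightarrow> game_lf leA G H"
| lf_atom: "leA a b \<Longrightarrow> game_lf leA (Atom a) (Atom b)"

definition game_equiv :: "('a \<Rightarrow> 'a \<Rightarrow> bool) \<Rightarrow> 'a game \<Rightarrow> 'a game \<Rightarrow> bool" where
  "game_equiv leA G H \<longleftrightarrow> game_le leA G H \<and> game_le leA H G"

definition locally_monotone :: "('a \<Rightarrow> 'a \<Rightarrow> bool) \<Rightarrow> 'a game \<Rightarrow> bool" where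
  "locally_monotone leA G \<longleftrightarrow>
     (\<forall>GL \<in> lefts G. game_le leA G GL) \<and> (\<forall>GR \<in> rights G. game_le leA GR G)"

definition monotone_game :: "('a \<Rightarrow> 'a \<Rightarrow> bool) \<Rightarrow> 'a game \<Rightarrow> bool" where
  "monotone_game leA G \<longleftrightarrow> (\<forall>P \<in> positions G. locally_monotone leA P)"

datatype L5 = A0 | A1 | A2 | A3 | A4

fun L5_idx :: "L5 \<Rightarrow> nat" where
  "L5_idx A0 = 0" | "L5_idx A1 = 1" | "L5_idx A2 = 2" | "L5_idx A3 = 3" | "L5_idx A4 = 4"

definition L5_le :: "L5 \<Rightarrow> L5 \<Rightarrow> bool" where
  "L5_le a b \<longleftrightarrow> L5_idx a \<le> L5_idx b"

end

theory Submission
  imports Defs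
begin

abbreviation le5 where "le5 \<equiv> game_le L5_le"
abbreviation lf5 where "lf5 \<equiv> game_lf L5_le"

lemma le_iff:
  "game_le r G H \<longleftrightarrow> (\<forall>GL\<in>lefts G. game_lf r GL H) \<and> (\<forall>HR\<in>rights H. game_lf r G HR)
     \<and> (is_atomic G \<or> is_atomic H \<longrightarrow> game_lf r G H)"
  by (subst game_le.simps) blast

lemma lf_iff:
  "game_lf r G H \<longleftrightarrow> (\<exists>GR\<in>rights G. game_le r GR H) \<or> (\<exists>HL\<in>lefts H. game_le r G HL)
     \<or> (\<exists>a b. G = Atom a \<and> H = Atom b \<and> r a b)"
  by (subst game_lf.simps) blast

lemma le_AA[simp]: "game_le r (Atom a) (Atom b) \<longleftrightarrow> r a b"
  by (subst le_iff) (simp add: lf_iff)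
lemma lf_AA[simp]: "game_lf r (Atom a) (Atom b) \<longleftrightarrow> r a b"
  by (simp add: lf_iff)
lemma le_AC[simp]: "game_le r (Atom a) (Comp L R) \<longleftrightarrow>
   (\<forall>HR\<in>fset R. game_lf r (Atom a) HR) \<and> (\<exists>HL\<in>fset L. game_le r (Atom a) HL)"
  by (subst le_iff) (simp add: lf_iff)
lemma le_CA[simp]: "game_le r (Comp L R) (Atom b) \<longleftrightarrow>
   (\<forall>GL\<in>fset L. game_lf r GL (Atom b)) \<and> (\<exists>GR\<in>fset R. game_le r GR (Atom b))"
  by (subst le_iff) (simp add: lf_iff)
lemma le_CC[simp]: "game_le r (Comp L R) (Comp L' R') \<longleftrightarrow>
   (\<forall>GL\<in>fset L. game_lf r GL (Comp L' R')) \<and> (\<forall>HR\<in>fset R'. game_lf r (Comp L R) HR)"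
  by (subst le_iff) simp
lemma lf_AC[simp]: "game_lf r (Atom a) (Comp L R) \<longleftrightarrow> (\<exists>HL\<in>fset L. game_le r (Atom a) HL)"
  by (subst lf_iff) simp
lemma lf_CA[simp]: "game_lf r (Comp L R) (Atom b) \<longleftrightarrow> (\<exists>GR\<in>fset R. game_le r GR (Atom b))"
  by (subst lf_iff) simp
lemma lf_CC[simp]: "game_lf r (Comp L R) (Comp L' R') \<longleftrightarrow>
   (\<exists>GR\<in>fset R. game_le r GR (Comp L' R')) \<or> (\<exists>HL\<in>fset L'. game_le r (Comp L R) HL)"
  by (subst lf_iff) simp

lemma lf_rI[simp]: "(\<exists>GR\<in>fset R. game_le r GR H) \<Longrightarrow> game_lf r (Comp L R) H"
  by (simp add: lf_iff)
lemma lf_lI[simp]: "(\<exists>HL\<in>fset L. game_le r G HL) \<Longrightarrow> game_lf r G (Comp L R)"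
  by (simp add: lf_iff)

definition K :: "L5 game" where "K = Comp {|Atom A4|} {|Atom A2|}"
definition Dg :: "L5 game \<Rightarrow> L5 game" where "Dg X = Comp {|Atom A3|} {|X|}"
definition Cg :: "L5 game \<Rightarrow> L5 game" where "Cg X = Comp {|Dg X|} {|Atom A0|}"
definition Bg :: "L5 game \<Rightarrow> L5 game" where "Bg X = Comp {|K|} {|Cg X|}"
definition fg :: "L5 game \<Rightarrow> L5 game" where "fg X = Comp {|Bg X|} {|Atom A0|}"

primrec Gs :: "nat \<Rightarrow> L5 game" where
  "Gs 0 = Atom A1"
| "Gs (Suc n) = fg (Gs n)"

lemmas defs = K_def Dg_def Cg_def Bg_def fg_def L5_le_def

lemma not_D_le_B: "\<not> le5 (Dg X) (Bg Y)"
  by (simp add: defs)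


lemma not_B_le_D: "\<not> lf5 (Atom A2) Y \<Longrightarrow> \<not> le5 (Bg X) (Dg Y)"
  by (simp add: defs)

lemma Gs_facts:
  "le5 (Gs n) (Atom A2) \<and> le5 (Gs n) (Atom A3) \<and> le5 (Atom A0) (Gs n) \<and> lf5 (Atom A0) (Gs n)
   \<and> lf5 (Gs n) (Gs n) \<and> le5 (Gs n) (Gs n) \<and> \<not> lf5 (Atom A2) (Gs n)"
proof (induction n)
  case 0
  then show ?case by (simp add: defs)
next
  case (Suc n)
  then show ?case by (simp add: defs)
qed

lemma Gs_neq:
  "\<forall>j>i. \<not> le5 (Gs i) (Gs j) \<and> \<not> le5 (Gs i) (Cg (Gs j)) \<and> \<not> le5 (Cg (Gs i)) (Cg (Gs j))"
proof (induction i)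
  case 0
  show ?case
  proof (intro allI impI)
    fix j :: nat assume "0 < j"
    then obtain l where j: "j = Suc l" by (cases j) auto
    have a: "\<not> le5 (Gs 0) (Gs j)" unfolding j by (simp add: defs)
    have b: "\<not> le5 (Gs 0) (Cg (Gs j))" unfolding j by (simp add: defs)
    have c: "\<not> le5 (Cg (Gs 0)) (Cg (Gs j))" using a b unfolding j by (simp add: defs)
    show "\<not> le5 (Gs 0) (Gs j) \<and> \<not> le5 (Gs 0) (Cg (Gs j)) \<and> \<not> le5 (Cg (Gs 0)) (Cg (Gs j))"
      using a b c by blast
  qed
next
  case (Suc k)
  show ?case
  proof (intro allI impI)
    fix j :: nat assume "Suc k < j"
    then obtain l where j: "j = Suc l" and kl: "k < l" by (cases j) auto
    have i1: "\<not> le5 (Gs k) (Gs (Suc l))" using spec[OF Suc.IH, of "Suc l"] kl by auto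
    have i2: "\<not> le5 (Cg (Gs k)) (Cg (Gs l))" using spec[OF Suc.IH, of l] kl by auto
    have i3: "\<not> le5 (Cg (Gs k)) (Cg (Gs (Suc l)))" using spec[OF Suc.IH, of "Suc l"] kl by auto
    have n2: "\<not> lf5 (Atom A2) (Gs l)" using Gs_facts by blast
    have a: "\<not> le5 (Gs (Suc k)) (Gs j)" using i1 i2 n2 unfolding j by (simp add: defs)
    have b: "\<not> le5 (Gs (Suc k)) (Cg (Gs j))" using i3 n2 unfolding j by (simp add: defs)
    have c: "\<not> le5 (Cg (Gs (Suc k))) (Cg (Gs j))" using a b unfolding j by (simp add: defs)
    show "\<not> le5 (Gs (Suc k)) (Gs j) \<and> \<not> le5 (Gs (Suc k)) (Cg (Gs j)) \<and> \<not> le5 (Cg (Gs (Suc k))) (Cg (Gs j))"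
      using a b c by blast
  qed
qed


lemma pos_trans: "y \<in> positions x \<Longrightarrow> x \<in> positions G \<Longrightarrow> y \<in> positions G"
  by (induction y rule: positions.induct) (auto intro: positions.intros)

lemma pos_Atom[simp]: "positions (Atom a) = {Atom a}"
proof -
  have "y \<in> positions (Atom a) \<Longrightarrow> y = Atom a" for y
    by (induction y rule: positions.induct) auto
  then show ?thesis by (auto intro: positions.self)
qed

lemma pos_Comp[simp]: "positions (Comp L R) = insert (Comp L R) (\<Union>x\<in>fset L \<union> fset R. positions x)"
proof
  show "positions (Comp L R) \<subseteq> insert (Comp L R) (\<Union>x\<in>fset L \<union> fset R. positions x)"
  proof
    fix y assume "y \<in> positions (Comp L R)"
    then show "y \<in> insert (Comp L R) (\<Union>x\<in>fset L \<union> fset R. positions x)"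
      by (induction y rule: positions.induct) (auto intro: positions.intros)
  qed
next
  have "x \<in> positions (Comp L R)" if "x \<in> fset L \<union> fset R" for x
    using that positions.left[OF positions.self, of x "Comp L R"]
      positions.right[OF positions.self, of x "Comp L R"] by auto
  then show "insert (Comp L R) (\<Union>x\<in>fset L \<union> fset R. positions x) \<subseteq> positions (Comp L R)"
    by (auto intro: positions.self pos_trans)
qed

lemma mono_Atom[simp]: "monotone_game r (Atom a)"
  by (simp add: monotone_game_def locally_monotone_def)
lemma mono_Comp[simp]: "monotone_game r (Comp L R) \<longleftrightarrow>
   locally_monotone r (Comp L R) \<and> (\<forall>x\<in>fset L \<union> fset R. monotone_game r x)"
  by (auto simp: monotone_game_def)
lemma wf_Atom[simp]: "wf_game (Atom a)"
  by (simp add: wf_game_def)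
lemma wf_Comp[simp]: "wf_game (Comp L R) \<longleftrightarrow>
   fset L \<noteq> {} \<and> fset R \<noteq> {} \<and> (\<forall>x\<in>fset L \<union> fset R. wf_game x)"
  by (auto simp: wf_game_def)

lemma Gs_D: "le5 (Gs n) (Dg (Gs n))"
proof (cases n)
  case 0 then show ?thesis by (simp add: defs)
next
  case (Suc m)
  then show ?thesis using Gs_facts[of m] Gs_facts[of n] by (simp add: defs)
qed

lemma L5_le_simps: "L5_le a b \<longleftrightarrow> L5_idx a \<le> L5_idx b"
  by (simp add: L5_le_def)

lemmas defs2 = K_def Dg_def Cg_def Bg_def fg_def

lemma lm_K: "locally_monotone L5_le K"
  by (simp add: defs2 locally_monotone_def L5_le_def)
lemma lm_D: "le5 X (Atom A3) \<Longrightarrow> le5 X (Dg X) \<Longrightarrow> locally_monotone L5_le (Dg X)"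
  by (simp add: defs2 locally_monotone_def L5_le_def)
lemma lm_C: "le5 (Atom A0) X \<Longrightarrow> lf5 (Atom A0) X \<Longrightarrow> le5 X (Dg X) \<Longrightarrow> locally_monotone L5_le (Cg X)"
  unfolding locally_monotone_def Cg_def
  by (simp add: Dg_def L5_le_def)
lemma lm_B: "le5 (Atom A0) X \<Longrightarrow> lf5 (Atom A0) X \<Longrightarrow> le5 X (Atom A2) \<Longrightarrow> locally_monotone L5_le (Bg X)"
  unfolding locally_monotone_def Bg_def
  by (simp add: Dg_def Cg_def K_def L5_le_def)
lemma lm_f: "le5 (Atom A0) X \<Longrightarrow> lf5 (Atom A0) X \<Longrightarrow> le5 X (Atom A2) \<Longrightarrow> le5 X (Dg X) \<Longrightarrow> locally_monotone L5_le (fg X)"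
  unfolding locally_monotone_def fg_def
  by (simp add: Dg_def Cg_def K_def Bg_def L5_le_def)

lemma Gs_mono: "monotone_game L5_le (Gs n) \<and> wf_game (Gs n)"
proof (induction n)
  case 0 then show ?case by simp
next
  case (Suc n)
  have f: "le5 (Atom A0) (Gs n)" "lf5 (Atom A0) (Gs n)" "le5 (Gs n) (Atom A2)" "le5 (Gs n) (Atom A3)"
    using Gs_facts[of n] by auto
  have lms: "locally_monotone L5_le K" "locally_monotone L5_le (Dg (Gs n))"
    "locally_monotone L5_le (Cg (Gs n))" "locally_monotone L5_le (Bg (Gs n))"
    "locally_monotone L5_le (fg (Gs n))"
    using lm_K lm_D lm_C lm_B lm_f f Gs_D[of n] by auto
  have mK: "monotone_game L5_le K" using lm_K by (simp add: K_def)
  have mD: "monotone_game L5_le (Dg (Gs n))" using lms Suc by (simp add: Dg_def)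
  have mC: "monotone_game L5_le (Cg (Gs n))" using lms mD by (simp add: Cg_def)
  have mB: "monotone_game L5_le (Bg (Gs n))" using lms mC mK by (simp add: Bg_def)
  have mf: "monotone_game L5_le (fg (Gs n))" using lms mB by (simp add: fg_def)
  have "wf_game (fg (Gs n))" using Suc by (simp add: defs2)
  then show ?case using mf by simp
qed

lemma Gs_ne: "i \<noteq> j \<Longrightarrow> \<not> game_equiv L5_le (Gs i) (Gs j)"
proof (cases "i < j")
  case True
  then have "\<not> le5 (Gs i) (Gs j)" using Gs_neq[of i] by blast
  then show ?thesis unfolding game_equiv_def by blast
next
  case False
  assume "i \<noteq> j"
  with False have "j < i" by simp
  then have "\<not> le5 (Gs j) (Gs i)" using Gs_neq[of j] by blast
  then show ?thesis unfolding game_equiv_def by blast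
qed

lemma Gs_inj: "inj Gs"
proof (rule injI)
  fix i j assume eq: "Gs i = Gs j"
  have r: "le5 (Gs i) (Gs i)"
    using Gs_facts[of i, THEN conjunct2, THEN conjunct2, THEN conjunct2, THEN conjunct2, THEN conjunct2, THEN conjunct1] .
  have "game_equiv L5_le (Gs i) (Gs j)" unfolding game_equiv_def eq[symmetric] by (intro conjI r)
  then show "i = j" using Gs_ne[of i j] by (cases "i = j") auto
qed

theorem corollary3p5:
  shows "\<exists>S :: L5 game set. infinite S \<and>
           (\<forall>G \<in> S. wf_game G \<and> monotone_game L5_le G) \<and>
           (\<forall>G \<in> S. \<forall>H \<in> S. G \<noteq> H \<longrightarrow> \<not> game_equiv L5_le G H)"
proof (intro exI conjI)
  show "infinite (range Gs)"
  proof
    assume "finite (range Gs)"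
    then have "finite (UNIV :: nat set)" by (rule finite_imageD) (rule Gs_inj)
    then show False by (rule notE[OF infinite_UNIV_nat])
  qed
  show "\<forall>G \<in> range Gs. wf_game G \<and> monotone_game L5_le G"
  proof
    fix G assume "G \<in> range Gs"
    then obtain n where "G = Gs n" by blast
    then show "wf_game G \<and> monotone_game L5_le G" using Gs_mono[of n] by simp
  qed
  show "\<forall>G \<in> range Gs. \<forall>H \<in> range Gs. G \<noteq> H \<longrightarrow> \<not> game_equiv L5_le G H"
  proof (intro ballI impI)
    fix G H assume "G \<in> range Gs" "H \<in> range Gs" "G \<noteq> H"
    then obtain i j where "G = Gs i" "H = Gs j" "i \<noteq> j" by blast
    then show "\<not> game_equiv L5_le G H" using Gs_ne[of i j] by simp
  qed
qed

end
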